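(* Let $V$ be a finite nonempty set and $f:\{0,1\}^V\to\{0,1\}^V$ be non-expansive. (1) If for every $1\le k\le |V|$ there are at most $2^k-1$ points $x\in\{0,1\}^V$ such that $Gf(x)$ has a chordless positive cycle of length $k$, then $f$ has at most one fixed point. (2) If for every $1\le k\le |V|$ there are at most $2^k-1$ points $x\in\{0,1\}^V$ such that $Gf(x)$ has a chordless negative cycle of length $k$, then $f$ has at least one fixed point.
   Context: $d$ is the Hamming distance; $f$ is non-expansive if $d(f(x),f(y))\le d(x,y)$ for all $x,y$. For $x^{j\alpha}$ the point equal to $x$ except its $j$-component is $\alpha$, the local interaction graph $Gf(x)$ is the signed digraph on $V$ with a positive arc from $j$ to $i$ if $f_i(x^{j1})-f_i(x^{j0})=1$ and a negative arc if it equals $-1$ (loops allowed). A cycle of a signed digraph $G$ is a subgraph whose underlying unsigned digraph is a directed cycle (length = number of arcs); it is positive (negative) if it has an even (odd) number of negative arcs; it is chordless if its underlying unsigned digraph is an induced subgraph of the underlying unsigned digraph of $G$. *)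

theory Defs
  imports Main
begin

text \<open>Points of {0,1}^V are functions V \<Rightarrow> bool (True = 1), V a finite type.\<close>

definition hamming :: "('v::finite \<Rightarrow> bool) \<Rightarrow> ('v \<Rightarrow> bool) \<Rightarrow> nat" where
  "hamming x y = card {i. x i \<noteq> y i}"

definition non_expansive :: "(('v::finite \<Rightarrow> bool) \<Rightarrow> ('v \<Rightarrow> bool)) \<Rightarrow> bool" where
  "non_expansive f \<longleftrightarrow> (\<forall>x y. hamming (f x) (f y) \<le> hamming x y)"

text \<open>Sign of the arc j \<rightarrow> i in Gf(x): f_i(x^{j1}) - f_i(x^{j0}) \<in> {-1,0,1};
  0 means no arc, 1 a positive arc, -1 a negative arc.\<close>
definition arc_sign :: "(('v \<Rightarrow> bool) \<Rightarrow> ('v \<Rightarrow> bool)) \<Rightarrow> ('v \<Rightarrow> bool) \<Rightarrow> 'v \<Rightarrow> 'v \<Rightarrow> int" where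
  "arc_sign f x j i = of_bool (f (x(j := True)) i) - of_bool (f (x(j := False)) i)"

definition arc :: "(('v \<Rightarrow> bool) \<Rightarrow> ('v \<Rightarrow> bool)) \<Rightarrow> ('v \<Rightarrow> bool) \<Rightarrow> 'v \<Rightarrow> 'v \<Rightarrow> bool" where
  "arc f x j i \<longleftrightarrow> arc_sign f x j i \<noteq> 0"

text \<open>Since Gf(x) has at most one arc per
  ordered pair, the cycle is determined by its vertex sequence.\<close>
definition is_cycle :: "(('v \<Rightarrow> bool) \<Rightarrow> ('v \<Rightarrow> bool)) \<Rightarrow> ('v \<Rightarrow> bool) \<Rightarrow> 'v list \<Rightarrow> bool" where
  "is_cycle f x cs \<longleftrightarrow> cs \<noteq> [] \<and> distinct cs \<and>
     (\<forall>t < length cs. arc f x (cs ! t) (cs ! ((t + 1) mod length cs)))"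

definition chordless :: "(('v \<Rightarrow> bool) \<Rightarrow> ('v \<Rightarrow> bool)) \<Rightarrow> ('v \<Rightarrow> bool) \<Rightarrow> 'v list \<Rightarrow> bool" where
  "chordless f x cs \<longleftrightarrow> (\<forall>u \<in> set cs. \<forall>v \<in> set cs. arc f x u v \<longrightarrow>
     (\<exists>t < length cs. u = cs ! t \<and> v = cs ! ((t + 1) mod length cs)))"

definition num_neg_arcs :: "(('v \<Rightarrow> bool) \<Rightarrow> ('v \<Rightarrow> bool)) \<Rightarrow> ('v \<Rightarrow> bool) \<Rightarrow> 'v list \<Rightarrow> nat" where
  "num_neg_arcs f x cs = card {t. t < length cs \<and> arc_sign f x (cs ! t) (cs ! ((t + 1) mod length cs)) = -1}"

definition has_chordless_pos_cycle :: "(('v \<Rightarrow> bool) \<Rightarrow> ('v \<Rightarrow> bool)) \<Rightarrow> ('v \<Rightarrow> bool) \<Rightarrow> nat \<Rightarrow> bool" where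
  "has_chordless_pos_cycle f x k \<longleftrightarrow> (\<exists>cs. is_cycle f x cs \<and> chordless f x cs \<and>
     length cs = k \<and> even (num_neg_arcs f x cs))"

definition has_chordless_neg_cycle :: "(('v \<Rightarrow> bool) \<Rightarrow> ('v \<Rightarrow> bool)) \<Rightarrow> ('v \<Rightarrow> bool) \<Rightarrow> nat \<Rightarrow> bool" where
  "has_chordless_neg_cycle f x k \<longleftrightarrow> (\<exists>cs. is_cycle f x cs \<and> chordless f x cs \<and>
     length cs = k \<and> odd (num_neg_arcs f x cs))"

end

theory Submission imports Defs begin

definition pt :: "('v \<Rightarrow> bool) \<Rightarrow> 'v set \<Rightarrow> ('v \<Rightarrow> bool)" where
  "pt x A = (\<lambda>i. if i \<in> A then \<not> x i else x i)"

definition DD :: "('v \<Rightarrow> bool) \<Rightarrow> ('v \<Rightarrow> bool) \<Rightarrow> 'v set" where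
  "DD x w = {i. w i \<noteq> x i}"

lemma pt_DD[simp]: "pt x (DD x w) = w"
  by (auto simp: pt_def DD_def fun_eq_iff)

lemma DD_pt[simp]: "DD x (pt x A) = A"
  by (auto simp: pt_def DD_def)

lemma pt_empty[simp]: "pt x {} = x"
  by (auto simp: pt_def)

lemma hamming_pt: "hamming (pt x A) (pt x B :: 'v::finite \<Rightarrow> bool) = card ((A - B) \<union> (B - A))"
  unfolding hamming_def by (rule arg_cong[where f=card]) (auto simp: pt_def)

lemma hamming_DD: "hamming x (w :: 'v::finite \<Rightarrow> bool) = card (DD x w)"
  unfolding hamming_def DD_def by (rule arg_cong[where f=card]) auto

lemma symdiff_sub:
  fixes P Q :: "'a::finite set"
  assumes "card ((P - Q) \<union> (Q - P)) \<le> card Q - card P"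
  shows "P \<subseteq> Q"
proof -
  have d: "card ((P - Q) \<union> (Q - P)) = card (P - Q) + card (Q - P)"
    by (rule card_Un_disjoint) auto
  have "card P = card (P \<inter> Q) + card (P - Q)"
    by (metis Int_Diff_disjoint Int_Diff_Un card_Un_disjoint finite)
  moreover have "card Q = card (P \<inter> Q) + card (Q - P)"
    by (metis Int_Diff_disjoint Int_Diff_Un card_Un_disjoint finite inf_commute)
  ultimately have "card (P - Q) = 0" using assms d by linarith
  then show ?thesis by simp
qed

lemma outdeg:
  assumes ne: "non_expansive (g :: ('v::finite \<Rightarrow> bool) \<Rightarrow> ('v \<Rightarrow> bool))"
    and "arc g z a i" "arc g z a i'"
  shows "i = i'"
proof -
  have "{i. (z(a := True)) i \<noteq> (z(a := False)) i} = {a}" by auto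
  then have "hamming (z(a := True)) (z(a := False)) = 1" by (simp add: hamming_def)
  then have c: "card {i. g (z(a := True)) i \<noteq> g (z(a := False)) i} \<le> Suc 0"
    using ne unfolding non_expansive_def hamming_def by (metis One_nat_def)
  have "i \<in> {i. g (z(a := True)) i \<noteq> g (z(a := False)) i}"
       "i' \<in> {i. g (z(a := True)) i \<noteq> g (z(a := False)) i}"
    using assms(2,3) by (auto simp: arc_def arc_sign_def)
  then show ?thesis using c card_le_Suc0_iff_eq[of "{i. g (z(a := True)) i \<noteq> g (z(a := False)) i}"]
    by auto
qed

lemma chordless_of_cycle:
  assumes ne: "non_expansive (g :: ('v::finite \<Rightarrow> bool) \<Rightarrow> ('v \<Rightarrow> bool))"
    and c: "is_cycle g z cs"
  shows "chordless g z cs"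
  unfolding chordless_def
proof (intro ballI impI)
  fix u v assume u: "u \<in> set cs" and "v \<in> set cs" and a: "arc g z u v"
  from u obtain t where t: "t < length cs" "u = cs ! t" by (auto simp: in_set_conv_nth)
  have "arc g z u (cs ! ((t + 1) mod length cs))" using c t by (auto simp: is_cycle_def)
  then have "v = cs ! ((t + 1) mod length cs)" using outdeg[OF ne a] by simp
  then show "\<exists>t<length cs. u = cs ! t \<and> v = cs ! ((t + 1) mod length cs)" using t by blast
qed

lemma par_lin: "odd (card {t. t < n \<and> (b::nat\<Rightarrow>bool) t \<noteq> b (Suc t)}) \<longleftrightarrow> b 0 \<noteq> b n"
proof (induction n)
  case 0 then show ?case by simp
next
  case (Suc n)
  have e: "{t. t < Suc n \<and> b t \<noteq> b (Suc t)} =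
    (if b n \<noteq> b (Suc n) then insert n {t. t < n \<and> b t \<noteq> b (Suc t)} else {t. t < n \<and> b t \<noteq> b (Suc t)})"
    by (auto simp: less_Suc_eq)
  show ?case
  proof (cases "b n \<noteq> b (Suc n)")
    case True
    then have "odd (card {t. t < Suc n \<and> b t \<noteq> b (Suc t)}) \<longleftrightarrow> even (card {t. t < n \<and> b t \<noteq> b (Suc t)})"
      by (subst e) (simp add: True)
    then show ?thesis using Suc.IH True by (cases "b 0"; cases "b n"; cases "b (Suc n)") auto
  next
    case False
    then show ?thesis using Suc.IH by (subst e) simp
  qed
qed

lemma par_cyc:
  assumes "0 < (p::nat)"
  shows "even (card {t. t < p \<and> (b::nat\<Rightarrow>bool) t \<noteq> b ((t + 1) mod p)})"
proof -
  define b' where "b' t = b (t mod p)" for t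
  have "{t. t < p \<and> b t \<noteq> b ((t + 1) mod p)} = {t. t < p \<and> b' t \<noteq> b' (Suc t)}"
    by (auto simp: b'_def)
  moreover have "\<not> (b' 0 \<noteq> b' p)" by (simp add: b'_def)
  ultimately show ?thesis using par_lin[of p b'] by simp
qed

lemma card_pt_Pow: "card (pt x ` Pow (I :: 'v::finite set)) = 2 ^ card I"
proof -
  have "inj_on (pt x) (Pow I)" by (rule inj_on_inverseI[where g="DD x"]) simp
  then show ?thesis by (simp add: card_image card_Pow)
qed

lemma symdiff_single_parity:
  fixes A :: "nat set" assumes "finite A"
  shows "odd (card ((A - {q}) \<union> ({q} - A))) \<longleftrightarrow> even (card A)"
proof (cases "q \<in> A")
  case True
  then have "(A - {q}) \<union> ({q} - A) = A - {q}" by auto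
  moreover have "card A > 0" using True assms card_gt_0_iff by blast
  ultimately show ?thesis using True assms by (auto simp add: card_Diff_singleton)
next
  case False
  then have "(A - {q}) \<union> ({q} - A) = insert q A" by auto
  then show ?thesis using False assms by simp
qed


lemma interval:
  fixes \<phi> :: "('v::finite \<Rightarrow> bool) \<Rightarrow> ('v \<Rightarrow> bool)"
  assumes ne: "non_expansive \<phi>" and fx: "\<phi> x = x" and fy: "\<phi> (pt x I) = pt x I"
    and Ine: "I \<noteq> {}"
    and minJ: "\<And>J. J \<subseteq> I \<Longrightarrow> J \<noteq> {} \<Longrightarrow> \<phi> (pt x J) = pt x J \<Longrightarrow> J = I"
  shows "\<exists>\<pi>. \<pi> ` I = I \<and> inj_on \<pi> I \<and> (\<forall>A \<subseteq> I. \<phi> (pt x A) = pt x (\<pi> ` A))"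
proof -
  define G where "G A = DD x (\<phi> (pt x A))" for A
  have Gpt: "\<phi> (pt x A) = pt x (G A)" for A by (simp add: G_def)
  have NE: "card ((G A - G B) \<union> (G B - G A)) \<le> card ((A - B) \<union> (B - A))" for A B
    using ne unfolding non_expansive_def by (metis Gpt hamming_pt)
  have G0: "G {} = {}" using fx by (simp add: G_def DD_def)
  have GI: "G I = I" using fy by (simp add: G_def)
  have lev: "G A \<subseteq> I \<and> card (G A) = card A" if AI: "A \<subseteq> I" for A
  proof -
    have c1: "card (G A) \<le> card A" using NE[of A "{}"] by (simp add: G0)
    have "card ((G A - I) \<union> (I - G A)) \<le> card ((A - I) \<union> (I - A))" using NE[of A I] by (simp add: GI)
    also have "(A - I) \<union> (I - A) = I - A" using AI by auto
    also have "card (I - A) = card I - card A" using AI by (simp add: card_Diff_subset)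
    finally have c2: "card ((G A - I) \<union> (I - G A)) \<le> card I - card A" .
    have d: "card ((G A - I) \<union> (I - G A)) = card (G A - I) + card (I - G A)"
      by (rule card_Un_disjoint) auto
    have c3: "card I - card (G A) \<le> card (I - G A)" by (rule diff_card_le_card_Diff) simp
    have c4: "card A \<le> card I" using AI by (simp add: card_mono)
    have "card (G A - I) = 0" using c1 c2 c3 c4 d by linarith
    then have s: "G A \<subseteq> I" by simp
    then have "card (I - G A) = card I - card (G A)" by (simp add: card_Diff_subset)
    then have "card (G A) = card A" using c1 c2 c3 c4 d by linarith
    with s show ?thesis by simp
  qed
  have mono: "G A \<subseteq> G B" if "A \<subseteq> B" "B \<subseteq> I" for A B
  proof (rule symdiff_sub)
    have "card ((G A - G B) \<union> (G B - G A)) \<le> card ((A - B) \<union> (B - A))" by (rule NE)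
    also have "(A - B) \<union> (B - A) = B - A" using that by auto
    also have "card (B - A) = card B - card A" using that by (simp add: card_Diff_subset)
    also have "\<dots> = card (G B) - card (G A)" using lev that by auto
    finally show "card ((G A - G B) \<union> (G B - G A)) \<le> card (G B) - card (G A)" .
  qed
  define \<pi> where "\<pi> a = the_elem (G {a})" for a
  have atom: "G {a} = {\<pi> a}" if "a \<in> I" for a
  proof -
    have "card (G {a}) = 1" using lev[of "{a}"] that by simp
    then obtain i where "G {a} = {i}" by (auto simp: card_Suc_eq)
    then show ?thesis by (simp add: \<pi>_def)
  qed
  have \<pi>I: "\<pi> a \<in> I" if "a \<in> I" for a using lev[of "{a}"] atom[OF that] that by auto
  have \<pi>G: "\<pi> ` A \<subseteq> G A" if "A \<subseteq> I" for A
  proof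
    fix i assume "i \<in> \<pi> ` A"
    then obtain a where a: "a \<in> A" "i = \<pi> a" by auto
    have "G {a} \<subseteq> G A" using mono[of "{a}" A] a that by auto
    then show "i \<in> G A" using atom[of a] a that by auto
  qed
  define P where "P J \<longleftrightarrow> J \<subseteq> I \<and> J \<noteq> {} \<and> \<pi> ` J \<subseteq> J" for J
  have PI: "P I" using Ine \<pi>I by (auto simp: P_def)
  obtain J0 where J0: "P J0" and J0min: "\<And>J. P J \<Longrightarrow> card J0 \<le> card J"
    using ex_has_least_nat[of P I card, OF PI] by blast
  have "P (\<pi> ` J0)" using J0 unfolding P_def by auto
  then have "card J0 \<le> card (\<pi> ` J0)" by (rule J0min)
  moreover have "card (\<pi> ` J0) \<le> card J0" by (rule card_image_le) simp
  ultimately have eqJ0: "\<pi> ` J0 = J0" using J0 unfolding P_def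
    by (metis card_subset_eq finite le_antisym)
  have "G J0 = J0"
  proof -
    have "J0 \<subseteq> G J0" using \<pi>G[of J0] J0 eqJ0 by (auto simp: P_def)
    moreover have "card (G J0) = card J0" using lev J0 by (auto simp: P_def)
    ultimately show ?thesis by (metis card_subset_eq finite)
  qed
  then have "\<phi> (pt x J0) = pt x J0" by (simp add: Gpt)
  then have "J0 = I" using minJ J0 by (auto simp: P_def)
  then have \<pi>II: "\<pi> ` I = I" using eqJ0 by simp
  have inj: "inj_on \<pi> I" by (rule eq_card_imp_inj_on) (auto simp: \<pi>II)
  have "\<phi> (pt x A) = pt x (\<pi> ` A)" if AI: "A \<subseteq> I" for A
  proof -
    have "card (\<pi> ` A) = card A" using inj AI by (meson card_image inj_on_subset)
    then have "\<pi> ` A = G A" using \<pi>G[OF AI] lev[OF AI] by (metis card_subset_eq finite)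
    then show ?thesis by (simp add: Gpt)
  qed
  with \<pi>II inj show ?thesis by blast
qed


lemma funpow_cancel:
  assumes inj: "inj_on \<pi> I" and sub: "\<pi> ` I \<subseteq> I"
  shows "v \<in> I \<Longrightarrow> w \<in> I \<Longrightarrow> (\<pi> ^^ n) v = (\<pi> ^^ n) w \<Longrightarrow> v = w"
proof (induction n arbitrary: v w)
  case 0 then show ?case by simp
next
  case (Suc n)
  have "(\<pi> ^^ n) (\<pi> v) = (\<pi> ^^ n) (\<pi> w)" using Suc.prems by (metis comp_apply funpow_Suc_right funpow_swap1)
  then have "\<pi> v = \<pi> w" using Suc.IH Suc.prems sub by blast
  then show ?case using inj Suc.prems by (meson inj_onD)
qed

lemma cycle_ex:
  fixes I :: "'v::finite set"
  assumes II: "\<pi> ` I = I" and inj: "inj_on \<pi> I" and u: "u \<in> I"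
  shows "\<exists>cs. cs \<noteq> [] \<and> distinct cs \<and> cs ! 0 = u \<and> set cs \<subseteq> I \<and>
           (\<forall>t < length cs. cs ! ((t + 1) mod length cs) = \<pi> (cs ! t))"
proof -
  define s where "s n = (\<pi> ^^ n) u" for n
  have sI: "s n \<in> I" for n
    using u II by (induction n) (auto simp: s_def)
  have sback: "s (k - m) = u" if "m \<le> k" "s m = s k" for m k
  proof -
    have "s k = (\<pi> ^^ m) (s (k - m))" using that(1)
      by (simp add: s_def) (metis funpow_add comp_apply le_add_diff_inverse)
    then have "(\<pi> ^^ m) (s (k - m)) = (\<pi> ^^ m) u" using that(2) by (simp add: s_def)
    then show ?thesis using funpow_cancel[OF inj, of "s (k - m)" u m] II sI u by blast
  qed
  have "\<not> inj s"
  proof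
    assume "inj s"
    moreover have "finite (range s)" by simp
    ultimately have "finite (UNIV :: nat set)" using finite_imageD by blast
    then show False by simp
  qed
  then obtain a b where ab: "a \<noteq> b" "s a = s b" unfolding inj_def by blast
  have "\<exists>n. 0 < n \<and> s n = u"
  proof (cases "a < b")
    case True then show ?thesis using sback[of a b] ab by (intro exI[of _ "b - a"]) auto
  next
    case False then show ?thesis using sback[of b a] ab by (intro exI[of _ "a - b"]) auto
  qed
  define p where "p = (LEAST n. 0 < n \<and> s n = u)"
  have pp: "0 < p" "s p = u" using LeastI_ex[OF \<open>\<exists>n. 0 < n \<and> s n = u\<close>] by (auto simp: p_def)
  have pmin: "\<not> (0 < n \<and> s n = u)" if "n < p" for n using not_less_Least[OF that[unfolded p_def]] by (simp add: p_def)
  have injs: "inj_on s {0..<p}"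
  proof (rule inj_onI)
    fix a b assume a: "a \<in> {0..<p}" and b: "b \<in> {0..<p}" and e: "s a = s b"
    show "a = b"
    proof (rule ccontr)
      assume "a \<noteq> b"
      then consider "a < b" | "b < a" by linarith
      then show False
      proof cases
        case 1 then show False using sback[of a b] e pmin[of "b - a"] b by (simp add: less_imp_diff_less)
      next
        case 2 then show False using sback[of b a] e pmin[of "a - b"] a by (simp add: less_imp_diff_less)
      qed
    qed
  qed
  define cs where "cs = map s [0..<p]"
  have len: "length cs = p" by (simp add: cs_def)
  have nth: "cs ! t = s t" if "t < p" for t using that by (simp add: cs_def)
  have "cs \<noteq> []" using pp len by auto
  moreover have "distinct cs" using injs by (simp add: cs_def distinct_map)
  moreover have "cs ! 0 = u" using nth[of 0] pp by (simp add: s_def)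
  moreover have "set cs \<subseteq> I" using sI by (auto simp: cs_def)
  moreover have "\<forall>t < length cs. cs ! ((t + 1) mod length cs) = \<pi> (cs ! t)"
  proof (intro allI impI)
    fix t assume t: "t < length cs"
    show "cs ! ((t + 1) mod length cs) = \<pi> (cs ! t)"
    proof (cases "t + 1 < p")
      case True
      then show ?thesis using t len nth by (simp add: s_def)
    next
      case False
      then have "t + 1 = p" using t len by simp
      then have "s p = \<pi> (s t)" by (auto simp: s_def)
      then show ?thesis using \<open>t + 1 = p\<close> len nth[of 0] nth[of t] pp t by (simp add: s_def)
    qed
  qed
  ultimately show ?thesis by blast
qed

lemma inj_img_mem: "inj_on f B \<Longrightarrow> a \<in> B \<Longrightarrow> C \<subseteq> B \<Longrightarrow> f a \<in> f ` C \<longleftrightarrow> a \<in> C"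
  by (auto simp: inj_on_def)

lemma sign_lemma:
  fixes \<phi> :: "('v::finite \<Rightarrow> bool) \<Rightarrow> ('v \<Rightarrow> bool)"
  assumes h: "\<forall>A \<subseteq> I. \<phi> (pt x A) = pt x (\<pi> ` A)" and inj: "inj_on \<pi> I"
    and AI: "A \<subseteq> I" and a: "a \<in> I"
  shows "arc_sign \<phi> (pt x A) a (\<pi> a) = (if x a = x (\<pi> a) then 1 else -1)"
proof -
  have upd: "(pt x A)(a := b) = pt x (if b \<noteq> x a then insert a A else A - {a})" for b
    by (auto simp: pt_def fun_eq_iff)
  have val: "\<phi> ((pt x A)(a := b)) (\<pi> a) = (if b \<noteq> x a then \<not> x (\<pi> a) else x (\<pi> a))" for b
  proof -
    let ?A' = "if b \<noteq> x a then insert a A else A - {a}"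
    have A'I: "?A' \<subseteq> I" using AI a by auto
    have "\<phi> ((pt x A)(a := b)) = pt x (\<pi> ` ?A')" using h A'I upd by simp
    moreover have "(\<pi> a \<in> \<pi> ` ?A') \<longleftrightarrow> a \<in> ?A'" by (rule inj_img_mem[OF inj a A'I])
    ultimately show ?thesis by (auto simp: pt_def)
  qed
  show ?thesis unfolding arc_sign_def val by (cases "x a"; cases "x (\<pi> a)") auto
qed


lemma pos_points:
  fixes \<phi> :: "('v::finite \<Rightarrow> bool) \<Rightarrow> ('v \<Rightarrow> bool)"
  assumes ne: "non_expansive \<phi>"
    and h: "\<forall>A \<subseteq> I. \<phi> (pt x A) = pt x (\<pi> ` A)" and inj: "inj_on \<pi> I"
    and cs: "cs \<noteq> []" "distinct cs" "set cs \<subseteq> I"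
       "\<forall>t < length cs. cs ! ((t + 1) mod length cs) = \<pi> (cs ! t)"
    and AI: "A \<subseteq> I"
  shows "is_cycle \<phi> (pt x A) cs"
    and "\<forall>t < length cs. arc_sign \<phi> (pt x A) (cs ! t) (cs ! ((t + 1) mod length cs)) =
            (if x (cs ! t) = x (cs ! ((t + 1) mod length cs)) then 1 else -1)"
proof -
  show sg: "\<forall>t < length cs. arc_sign \<phi> (pt x A) (cs ! t) (cs ! ((t + 1) mod length cs)) =
            (if x (cs ! t) = x (cs ! ((t + 1) mod length cs)) then 1 else -1)"
  proof (intro allI impI)
    fix t assume t: "t < length cs"
    have "cs ! t \<in> I" using cs(3) t nth_mem by blast
    then show "arc_sign \<phi> (pt x A) (cs ! t) (cs ! ((t + 1) mod length cs)) =
            (if x (cs ! t) = x (cs ! ((t + 1) mod length cs)) then 1 else -1)"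
      using sign_lemma[OF h inj AI, of "cs ! t"] cs(4) t by simp
  qed
  show "is_cycle \<phi> (pt x A) cs"
    unfolding is_cycle_def arc_def using cs sg by auto
qed

lemma part1:
  fixes f :: "('v::finite \<Rightarrow> bool) \<Rightarrow> ('v \<Rightarrow> bool)"
  assumes ne: "non_expansive f"
    and hyp: "\<forall>k. 1 \<le> k \<and> k \<le> card (UNIV :: 'v set) \<longrightarrow>
             card {x. has_chordless_pos_cycle f x k} \<le> 2 ^ k - 1"
  shows "card {x. f x = x} \<le> 1"
proof (rule ccontr)
  assume "\<not> card {x. f x = x} \<le> 1"
  then obtain a b where ab: "f a = a" "f b = b" "a \<noteq> b"
    using card_le_Suc0_iff_eq[of "{x. f x = x}"] by auto
  define Q where "Q = (\<lambda>(a, b). f a = a \<and> f b = b \<and> a \<noteq> b)"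
  have "Q (a, b)" using ab by (simp add: Q_def)
  then obtain xy where Qxy: "Q xy" and mn: "\<And>z. Q z \<Longrightarrow> (\<lambda>(a,b). hamming a b) xy \<le> (\<lambda>(a,b). hamming a b) z"
    using ex_has_least_nat[of Q "(a, b)" "\<lambda>(a,b). hamming a b"] by blast
  obtain x y where xy: "xy = (x, y)" by fastforce
  have fx: "f x = x" and fy: "f y = y" and xny: "x \<noteq> y" using Qxy xy by (auto simp: Q_def)
  have mn': "hamming x y \<le> hamming a' b'" if "f a' = a'" "f b' = b'" "a' \<noteq> b'" for a' b'
    using mn[of "(a', b')"] that xy by (auto simp: Q_def)
  define I where "I = DD x y"
  have yI: "pt x I = y" by (simp add: I_def)
  have Ine: "I \<noteq> {}" using xny yI by auto
  have minJ: "J = I" if "J \<subseteq> I" "J \<noteq> {}" "f (pt x J) = pt x J" for J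
  proof -
    have "pt x J \<noteq> x"
    proof
      assume e: "pt x J = x"
      have "J = DD x (pt x J)" by simp
      also have "\<dots> = {}" using e by (simp add: DD_def)
      finally show False using that(2) by simp
    qed
    then have "hamming x y \<le> hamming x (pt x J)" using mn'[of x "pt x J"] fx that(3) by metis
    then have "card I \<le> card J" by (simp add: hamming_DD I_def)
    then show ?thesis using that(1) by (metis card_subset_eq finite le_antisym card_mono)
  qed
  obtain \<pi> where \<pi>: "\<pi> ` I = I" "inj_on \<pi> I" "\<forall>A \<subseteq> I. f (pt x A) = pt x (\<pi> ` A)"
    using interval[OF ne fx, of I] yI fy Ine minJ by auto
  obtain u where u: "u \<in> I" using Ine by blast
  obtain cs where cs: "cs \<noteq> []" "distinct cs" "cs ! 0 = u" "set cs \<subseteq> I"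
       "\<forall>t < length cs. cs ! ((t + 1) mod length cs) = \<pi> (cs ! t)"
    using cycle_ex[OF \<pi>(1,2) u] by blast
  define p where "p = length cs"
  have p1: "1 \<le> p" using cs by (simp add: p_def Suc_le_eq)
  have pI: "p \<le> card I" using cs unfolding p_def by (metis card_mono distinct_card finite)
  have IV: "card I \<le> card (UNIV :: 'v set)" by (simp add: card_mono)
  have all: "has_chordless_pos_cycle f (pt x A) p" if AI: "A \<subseteq> I" for A
  proof -
    note pp = pos_points[OF ne \<pi>(3) \<pi>(2) cs(1,2,4,5) AI]
    have "{t. t < length cs \<and> arc_sign f (pt x A) (cs ! t) (cs ! ((t + 1) mod length cs)) = -1}
        = {t. t < length cs \<and> x (cs ! t) \<noteq> x (cs ! ((t + 1) mod length cs))}"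
      using pp(2) by (auto split: if_splits)
    moreover have "even (card {t. t < length cs \<and> x (cs ! t) \<noteq> x (cs ! ((t + 1) mod length cs))})"
      using par_cyc[of "length cs" "\<lambda>t. x (cs ! t)"] cs(1) by simp
    ultimately have "even (num_neg_arcs f (pt x A) cs)" by (simp add: num_neg_arcs_def)
    then show ?thesis unfolding has_chordless_pos_cycle_def
      using pp(1) chordless_of_cycle[OF ne pp(1)] p_def by blast
  qed
  have "pt x ` Pow I \<subseteq> {z. has_chordless_pos_cycle f z p}" using all by auto
  then have "card (pt x ` Pow I) \<le> card {z. has_chordless_pos_cycle f z p}" by (simp add: card_mono)
  then have "2 ^ card I \<le> card {z. has_chordless_pos_cycle f z p}" by (simp add: card_pt_Pow)
  moreover have "(2::nat) ^ p \<le> 2 ^ card I" using pI by (simp add: power_increasing)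
  moreover have "card {z. has_chordless_pos_cycle f z p} \<le> 2 ^ p - 1" using hyp p1 pI IV by auto
  moreover have "(0::nat) < 2 ^ p" by simp
  ultimately show False by linarith
qed


definition incube :: "'v set \<Rightarrow> ('v \<Rightarrow> bool) \<Rightarrow> ('v \<Rightarrow> bool) \<Rightarrow> bool" where
  "incube J x z \<longleftrightarrow> (\<forall>i. i \<notin> J \<longrightarrow> z i = x i)"

lemma arc_sign_upd: "i \<noteq> j \<Longrightarrow> arc_sign (\<lambda>z. (g z)(j := b)) z a i = arc_sign g z a i"
  by (simp add: arc_sign_def)

lemma arc_sign_neg: "arc_sign (\<lambda>z. (g z)(j := \<not> g z j)) z a j = - arc_sign g z a j"
  by (simp add: arc_sign_def of_bool_def)

lemma upd_ne:
  assumes "non_expansive (g :: ('v::finite \<Rightarrow> bool) \<Rightarrow> ('v \<Rightarrow> bool))"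
  shows "non_expansive (\<lambda>z. (g z)(j := b))"
  unfolding non_expansive_def
proof (intro allI)
  fix z w
  have "hamming ((g z)(j := b)) ((g w)(j := b)) \<le> hamming (g z) (g w)"
    unfolding hamming_def by (rule card_mono) auto
  then show "hamming ((g z)(j := b)) ((g w)(j := b)) \<le> hamming z w"
    using assms unfolding non_expansive_def by (meson le_trans)
qed

lemma neg_ne:
  assumes "non_expansive (g :: ('v::finite \<Rightarrow> bool) \<Rightarrow> ('v \<Rightarrow> bool))"
  shows "non_expansive (\<lambda>z. (g z)(j := \<not> g z j))"
  unfolding non_expansive_def
proof (intro allI)
  fix z w
  have "hamming ((g z)(j := \<not> g z j)) ((g w)(j := \<not> g w j)) = hamming (g z) (g w)"
    unfolding hamming_def by (rule arg_cong[where f=card]) auto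
  then show "hamming ((g z)(j := \<not> g z j)) ((g w)(j := \<not> g w j)) \<le> hamming z w"
    using assms unfolding non_expansive_def by simp
qed

lemma transfer_cycle:
  assumes "set cs \<subseteq> J" "j \<notin> J"
  shows "is_cycle (\<lambda>z. (g z)(j := b)) z cs = is_cycle g z cs"
    and "num_neg_arcs (\<lambda>z. (g z)(j := b)) z cs = num_neg_arcs g z cs"
proof -
  have nx: "cs ! ((t + 1) mod length cs) \<noteq> j" if "t < length cs" for t
  proof -
    have "length cs > 0" using that by (cases cs) auto
    then have "cs ! ((t + 1) mod length cs) \<in> set cs" by simp
    then show ?thesis using assms by auto
  qed
  have e: "arc_sign (\<lambda>z. (g z)(j := b)) z (cs ! t) (cs ! ((t + 1) mod length cs))
      = arc_sign g z (cs ! t) (cs ! ((t + 1) mod length cs))" if "t < length cs" for t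
    using arc_sign_upd[OF nx[OF that]] by blast
  show "is_cycle (\<lambda>z. (g z)(j := b)) z cs = is_cycle g z cs"
    unfolding is_cycle_def arc_def using e by auto
  show "num_neg_arcs (\<lambda>z. (g z)(j := b)) z cs = num_neg_arcs g z cs"
    unfolding num_neg_arcs_def using e by (intro arg_cong[where f=card] Collect_cong) auto
qed


lemma neg_main:
  fixes g :: "('v::finite \<Rightarrow> bool) \<Rightarrow> ('v \<Rightarrow> bool)"
  shows "card J = n \<Longrightarrow> non_expansive g \<Longrightarrow> (\<forall>z. incube J x z \<longrightarrow> incube J x (g z)) \<Longrightarrow>
    (\<forall>z. incube J x z \<longrightarrow> g z \<noteq> z) \<Longrightarrow>
    \<exists>p P. 1 \<le> p \<and> p \<le> card J \<and> 2 ^ p \<le> card P \<and>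
      (\<forall>z\<in>P. \<exists>cs. is_cycle g z cs \<and> length cs = p \<and> odd (num_neg_arcs g z cs) \<and> set cs \<subseteq> J)"
proof (induction n arbitrary: J g x)
  case 0
  then have "J = {}" by simp
  then have "incube J x x" by (simp add: incube_def)
  then have "g x = x" using 0 \<open>J = {}\<close> by (auto simp: incube_def fun_eq_iff)
  then show ?case using 0 \<open>incube J x x\<close> by blast
next
  case (Suc n)
  have ne: "non_expansive g" and inv: "\<forall>z. incube J x z \<longrightarrow> incube J x (g z)"
    and nf: "\<forall>z. incube J x z \<longrightarrow> g z \<noteq> z" using Suc.prems by auto
  obtain j where jJ: "j \<in> J" using Suc.prems(1) by (metis card.empty ex_in_conv nat.simps(3))
  define J' where "J' = J - {j}"
  have cJ': "card J' = n" using Suc.prems(1) jJ by (simp add: J'_def)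
  have jJ': "j \<notin> J'" by (simp add: J'_def)
  have J'J: "J' \<subseteq> J" by (auto simp: J'_def)
  define h where "h b z = (g z)(j := b)" for b z
  have cube_sub: "incube J x z" if "incube J' (x(j := b)) z" for b z
    using that jJ by (auto simp: incube_def J'_def)
  have hinv: "incube J' (x(j := b)) (h b z)" if "incube J' (x(j := b)) z" for b z
  proof -
    have "incube J x (g z)" using inv cube_sub[OF that] by blast
    then show ?thesis using jJ by (auto simp: incube_def J'_def h_def)
  qed
  show ?case
  proof (cases "\<exists>b. \<forall>z. incube J' (x(j := b)) z \<longrightarrow> h b z \<noteq> z")
    case True
    then obtain b where b: "\<forall>z. incube J' (x(j := b)) z \<longrightarrow> h b z \<noteq> z" by blast
    have hne: "non_expansive (h b)" using upd_ne[OF ne] by (simp add: h_def[abs_def])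
    obtain p P where pP: "1 \<le> p" "p \<le> card J'" "2 ^ p \<le> card P"
      "\<forall>z\<in>P. \<exists>cs. is_cycle (h b) z cs \<and> length cs = p \<and> odd (num_neg_arcs (h b) z cs) \<and> set cs \<subseteq> J'"
      using Suc.IH[OF cJ' hne _ b] hinv by blast
    have "\<forall>z\<in>P. \<exists>cs. is_cycle g z cs \<and> length cs = p \<and> odd (num_neg_arcs g z cs) \<and> set cs \<subseteq> J"
    proof
      fix z assume "z \<in> P"
      then obtain cs where cs: "is_cycle (h b) z cs" "length cs = p" "odd (num_neg_arcs (h b) z cs)" "set cs \<subseteq> J'"
        using pP(4) by blast
      have hb: "h b = (\<lambda>z. (g z)(j := b))" by (simp add: h_def[abs_def])
      show "\<exists>cs. is_cycle g z cs \<and> length cs = p \<and> odd (num_neg_arcs g z cs) \<and> set cs \<subseteq> J"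
        using cs transfer_cycle[OF cs(4) jJ', of g b z] J'J unfolding hb by auto
    qed
    moreover have "p \<le> card J" using pP(2) J'J card_mono[of J J'] by simp
    ultimately show ?thesis using pP(1,3) by blast
  next
    case False
    then have ex: "\<exists>z. incube J' (x(j := b)) z \<and> h b z = z" for b by blast
    define \<phi> where "\<phi> z = (g z)(j := \<not> g z j)" for z
    have \<phi>ne: "non_expansive \<phi>" using neg_ne[OF ne] by (simp add: \<phi>_def[abs_def])
    have \<phi>fix: "\<phi> z = z \<and> z j = b" if "incube J' (x(j := b)) z" "h b z = z" for b z
    proof -
      have zc: "incube J x z" using cube_sub[OF that(1)] .
      have zj: "z j = b" using that(1) jJ' by (simp add: incube_def)
      have oth: "g z i = z i" if "i \<noteq> j" for i
        using \<open>h b z = z\<close> that by (metis fun_upd_other h_def)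
      have "g z j \<noteq> z j"
      proof
        assume gj: "g z j = z j"
        have "g z = z"
        proof (rule ext)
          fix i show "g z i = z i"
          proof (cases "i = j")
            case True then show ?thesis using gj by simp
          next
            case False then show ?thesis using oth by simp
          qed
        qed
        then show False using nf zc by blast
      qed
      then have "\<phi> z = z" using oth by (auto simp: \<phi>_def fun_eq_iff)
      then show ?thesis using zj by simp
    qed
    define Q where "Q = (\<lambda>(a, c). incube J' (x(j := False)) a \<and> incube J' (x(j := True)) c \<and> \<phi> a = a \<and> \<phi> c = c)"
    obtain z0 where z0: "incube J' (x(j := False)) z0" "h False z0 = z0" using ex by blast
    obtain z1 where z1: "incube J' (x(j := True)) z1" "h True z1 = z1" using ex by blast
    have "Q (z0, z1)" using \<phi>fix z0 z1 by (simp add: Q_def)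
    then obtain uu where Quu: "Q uu" and mn: "\<And>w. Q w \<Longrightarrow> (\<lambda>(a,c). hamming a c) uu \<le> (\<lambda>(a,c). hamming a c) w"
      using ex_has_least_nat[of Q "(z0, z1)" "\<lambda>(a,c). hamming a c"] by blast
    obtain u0 u1 where uu: "uu = (u0, u1)" by fastforce
    have u0: "incube J' (x(j := False)) u0" "\<phi> u0 = u0" and u1: "incube J' (x(j := True)) u1" "\<phi> u1 = u1"
      using Quu uu by (auto simp: Q_def)
    have mn': "hamming u0 u1 \<le> hamming a c" if "Q (a, c)" for a c
      using mn[OF that] uu by simp
    have u0j: "u0 j = False" and u1j: "u1 j = True" using u0(1) u1(1) jJ' by (auto simp: incube_def)
    define I where "I = DD u0 u1"
    have u1I: "pt u0 I = u1" by (simp add: I_def)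
    have jI: "j \<in> I" using u0j u1j by (simp add: I_def DD_def)
    have IJ: "I \<subseteq> J"
    proof
      fix i assume "i \<in> I"
      then have "u1 i \<noteq> u0 i" by (simp add: I_def DD_def)
      show "i \<in> J"
      proof (rule ccontr)
        assume ni: "i \<notin> J"
        then have "i \<notin> J'" "i \<noteq> j" using jJ by (auto simp: J'_def)
        then have "u0 i = x i" "u1 i = x i" using u0(1) u1(1) by (auto simp: incube_def)
        then show False using \<open>u1 i \<noteq> u0 i\<close> by simp
      qed
    qed
    have Ine: "I \<noteq> {}" using jI by blast
    have minJ: "J0 = I" if J0: "J0 \<subseteq> I" "J0 \<noteq> {}" "\<phi> (pt u0 J0) = pt u0 J0" for J0
    proof -
      let ?w = "pt u0 J0"
      have wout: "?w i = x i" if "i \<notin> J" for i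
      proof -
        have "i \<notin> J0" using that J0(1) IJ by blast
        then have "?w i = u0 i" by (simp add: pt_def)
        also have "\<dots> = x i" using u0(1) that jJ by (auto simp: incube_def J'_def)
        finally show ?thesis .
      qed
      show ?thesis
      proof (cases "j \<in> J0")
        case True
        have "incube J' (x(j := True)) ?w"
          unfolding incube_def using wout True u0j by (auto simp: J'_def pt_def)
        then have "Q (u0, ?w)" using u0 J0(3) by (simp add: Q_def)
        then have "hamming u0 u1 \<le> hamming u0 ?w" by (rule mn')
        then have "card I \<le> card J0" by (simp add: hamming_DD I_def)
        then show ?thesis using J0(1) by (metis card_subset_eq finite le_antisym card_mono)
      next
        case False
        have "incube J' (x(j := False)) ?w"
          unfolding incube_def using wout False u0j by (auto simp: J'_def pt_def)
        then have "Q (?w, u1)" using u1 J0(3) by (simp add: Q_def)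
        then have "hamming u0 u1 \<le> hamming ?w u1" by (rule mn')
        also have "hamming ?w u1 = card ((J0 - I) \<union> (I - J0))" using u1I hamming_pt by metis
        also have "(J0 - I) \<union> (I - J0) = I - J0" using J0(1) by auto
        finally have "card I \<le> card (I - J0)" by (simp add: hamming_DD I_def)
        moreover have "card (I - J0) = card I - card J0" using J0(1) by (simp add: card_Diff_subset)
        moreover have "card J0 > 0" using J0(2) by (simp add: card_gt_0_iff)
        moreover have "card J0 \<le> card I" using J0(1) by (simp add: card_mono)
        ultimately show ?thesis by linarith
      qed
    qed
    obtain \<pi> where \<pi>: "\<pi> ` I = I" "inj_on \<pi> I" "\<forall>A \<subseteq> I. \<phi> (pt u0 A) = pt u0 (\<pi> ` A)"
      using interval[OF \<phi>ne u0(2), of I] u1I u1(2) Ine minJ by auto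
    obtain cs where cs: "cs \<noteq> []" "distinct cs" "cs ! 0 = j" "set cs \<subseteq> I"
       "\<forall>t < length cs. cs ! ((t + 1) mod length cs) = \<pi> (cs ! t)"
      using cycle_ex[OF \<pi>(1,2) jI] by blast
    define p where "p = length cs"
    have p1: "1 \<le> p" using cs by (simp add: p_def Suc_le_eq)
    have pI: "p \<le> card I" using cs unfolding p_def by (metis card_mono distinct_card finite)
    have IJc: "card I \<le> card J" using IJ by (simp add: card_mono)
    have nxj: "cs ! ((t + 1) mod p) = j \<longleftrightarrow> t = p - 1" if "t < p" for t
    proof -
      have "cs ! ((t + 1) mod p) = cs ! 0 \<longleftrightarrow> (t + 1) mod p = 0"
      proof -
        have "(t + 1) mod p < length cs" "0 < length cs" using p1 by (auto simp: p_def intro!: mod_less_divisor)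
        then show ?thesis by (rule nth_eq_iff_index_eq[OF cs(2)])
      qed
      also have "\<dots> \<longleftrightarrow> t = p - 1"
      proof (cases "t + 1 < p")
        case True then show ?thesis by simp
      next
        case False then have "t + 1 = p" using that by simp
        then show ?thesis by simp
      qed
      finally show ?thesis using cs(3) by simp
    qed
    have all: "\<exists>cs. is_cycle g z cs \<and> length cs = p \<and> odd (num_neg_arcs g z cs) \<and> set cs \<subseteq> J"
      if zP: "z \<in> pt u0 ` Pow I" for z
    proof -
      obtain A where AI: "A \<subseteq> I" and z: "z = pt u0 A" using zP by auto
      note pp = pos_points[OF \<phi>ne \<pi>(3) \<pi>(2) cs(1,2,4,5) AI]
      have sg: "arc_sign g z (cs ! t) (cs ! ((t + 1) mod p)) =
          (if t = p - 1 then - 1 else 1) * (if u0 (cs ! t) = u0 (cs ! ((t + 1) mod p)) then 1 else -1)"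
        if t: "t < p" for t
      proof -
      have e2: "arc_sign \<phi> z (cs ! t) (cs ! ((t + 1) mod p)) = (if u0 (cs ! t) = u0 (cs ! ((t + 1) mod p)) then 1 else -1)"
        using pp(2) t unfolding z p_def by blast
      show ?thesis
      proof (cases "t = p - 1")
        case True
        then have "cs ! ((t + 1) mod p) = j" using nxj[OF t] by blast
        then have "arc_sign \<phi> z (cs ! t) (cs ! ((t + 1) mod p)) = - arc_sign g z (cs ! t) (cs ! ((t + 1) mod p))"
          using arc_sign_neg[of g j z "cs ! t"] by (simp add: \<phi>_def[abs_def])
        then show ?thesis using e2 True by simp
      next
        case False
        then have "cs ! ((t + 1) mod p) \<noteq> j" using nxj[OF t] by blast
        then have "arc_sign \<phi> z (cs ! t) (cs ! ((t + 1) mod p)) = arc_sign g z (cs ! t) (cs ! ((t + 1) mod p))"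
          by (simp add: \<phi>_def arc_sign_def)
        then show ?thesis using e2 False by simp
      qed
      qed
      have cyc: "is_cycle g z cs"
      proof -
        have "arc g z (cs ! t) (cs ! ((t + 1) mod length cs))" if "t < length cs" for t
          using sg[of t] that by (simp add: arc_def p_def split: if_splits)
        then show ?thesis using cs by (simp add: is_cycle_def)
      qed
      define A0 where "A0 = {t. t < p \<and> u0 (cs ! t) \<noteq> u0 (cs ! ((t + 1) mod p))}"
      have evA0: "even (card A0)" unfolding A0_def
        using par_cyc[of p "\<lambda>t. u0 (cs ! t)"] p1 by simp
      have "{t. t < length cs \<and> arc_sign g z (cs ! t) (cs ! ((t + 1) mod length cs)) = -1}
          = (A0 - {p - 1}) \<union> ({p - 1} - A0)"
      proof -
        have pl: "p - 1 < p" using p1 by simp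
        have A0sub: "A0 \<subseteq> {..<p}" by (auto simp: A0_def)
        have key: "arc_sign g z (cs ! t) (cs ! ((t + 1) mod p)) = -1 \<longleftrightarrow>
             ((u0 (cs ! t) \<noteq> u0 (cs ! ((t + 1) mod p))) \<noteq> (t = p - 1))" if t: "t < p" for t
          unfolding sg[OF t] by (cases "t = p - 1"; cases "u0 (cs ! t) = u0 (cs ! ((t + 1) mod p))") simp_all
        have "{t. t < length cs \<and> arc_sign g z (cs ! t) (cs ! ((t + 1) mod length cs)) = -1}
            = {t. t < p \<and> ((t \<in> A0) \<noteq> (t = p - 1))}"
          unfolding p_def[symmetric]
        proof (rule Collect_cong)
          fix t
          show "(t < p \<and> arc_sign g z (cs ! t) (cs ! ((t + 1) mod p)) = -1) \<longleftrightarrow>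
                (t < p \<and> ((t \<in> A0) \<noteq> (t = p - 1)))"
          proof (cases "t < p")
            case True
            then show ?thesis using key[OF True] unfolding A0_def by blast
          qed simp
        qed
        also have "\<dots> = (A0 - {p - 1}) \<union> ({p - 1} - A0)" using A0sub pl by auto
        finally show ?thesis .
      qed
      moreover have "finite A0" by (simp add: A0_def)
      ultimately have "odd (num_neg_arcs g z cs)"
        using symdiff_single_parity[of A0 "p - 1"] evA0 by (simp add: num_neg_arcs_def)
      then show ?thesis using cyc cs(4) IJ p_def by blast
    qed
    have "2 ^ p \<le> card (pt u0 ` Pow I)"
      using pI by (simp add: card_pt_Pow power_increasing)
    then show ?thesis using all p1 pI IJc by (meson le_trans)
  qed
qed


lemma part2:
  fixes f :: "('v::finite \<Rightarrow> bool) \<Rightarrow> ('v \<Rightarrow> bool)"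
  assumes ne: "non_expansive f"
    and hyp: "\<forall>k. 1 \<le> k \<and> k \<le> card (UNIV :: 'v set) \<longrightarrow>
             card {x. has_chordless_neg_cycle f x k} \<le> 2 ^ k - 1"
  shows "\<exists>x. f x = x"
proof (rule ccontr)
  assume nf: "\<not> (\<exists>x. f x = x)"
  obtain p P where pP: "1 \<le> p" "p \<le> card (UNIV :: 'v set)" "2 ^ p \<le> card P"
      "\<forall>z\<in>P. \<exists>cs. is_cycle f z cs \<and> length cs = p \<and> odd (num_neg_arcs f z cs) \<and> set cs \<subseteq> UNIV"
    using neg_main[of UNIV "card (UNIV :: 'v set)" f "\<lambda>_. False"] ne nf
    by (auto simp: incube_def)
  have "P \<subseteq> {z. has_chordless_neg_cycle f z p}"
    using pP(4) chordless_of_cycle[OF ne] unfolding has_chordless_neg_cycle_def by blast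
  then have "card P \<le> card {z. has_chordless_neg_cycle f z p}" by (simp add: card_mono)
  moreover have "card {z. has_chordless_neg_cycle f z p} \<le> 2 ^ p - 1" using hyp pP(1,2) by auto
  moreover have "(0::nat) < 2 ^ p" by simp
  ultimately show False using pP(3) by linarith
qed

theorem corollary8:
  fixes f :: "('v::finite \<Rightarrow> bool) \<Rightarrow> ('v \<Rightarrow> bool)"
  assumes "non_expansive f"
  shows "((\<forall>k. 1 \<le> k \<and> k \<le> card (UNIV :: 'v set) \<longrightarrow>
             card {x. has_chordless_pos_cycle f x k} \<le> 2 ^ k - 1)
           \<longrightarrow> card {x. f x = x} \<le> 1)
       \<and> ((\<forall>k. 1 \<le> k \<and> k \<le> card (UNIV :: 'v set) \<longrightarrow>
             card {x. has_chordless_neg_cycle f x k} \<le> 2 ^ k - 1)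
           \<longrightarrow> (\<exists>x. f x = x))"
  using part1[OF assms] part2[OF assms] by blast

end
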